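(* Consider a GNEP with $N$ players in which player $\nu$ has constraint function $c^\nu:\mathbb{R}^n\to\mathbb{R}^{r_\nu}$ (continuously differentiable). Let $\nu$ be a given index, let $x\in\mathbb{R}^n$ with $c^\nu(x)\le0$, and assume that $c^\nu$ satisfies MFCQ$_\nu$ in $x$. Then: (a) There is a neighbourhood $U$ of $x$ such that, for every $y\in U$, the set $X_\nu(y^{-\nu})$ is nonempty. (b) Given $\varepsilon>0$, there is a neighbourhood $U$ of $x$ such that for every $y\in U$ there is a point $z^\nu\in X_\nu(y^{-\nu})$ with $\|z^\nu-y^\nu\|\le\varepsilon$.
   Context: Variables: $x=(x^1,\ldots,x^N)\in\mathbb{R}^n$, $x^\nu\in\mathbb{R}^{n_\nu}$, written $x=(x^\nu,x^{-\nu})$ where $x^{-\nu}$ collects the other blocks. $X_\nu(x^{-\nu})=\{x^\nu\in\mathbb{R}^{n_\nu}: c^\nu(x^\nu,x^{-\nu})\le 0\}$. $\nabla_{x^\nu}c_i^\nu$ denotes the partial gradient with respect to $x^\nu$. MFCQ$_\nu$ at a point $x$ with $c^\nu(x)\le0$: there is $d^\nu\in\mathbb{R}^{n_\nu}$ with $\nabla_{x^\nu}c_i^\nu(x)^Td^\nu<0$ for every $i$ with $c_i^\nu(x)=0$ (equivalently, for every $i$ with $c_i^\nu(x)\ge 0$). Norms are Euclidean. *)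

theory Defs
  imports "HOL-Analysis.Analysis"
begin

text \<open>A point x of R^n is written as the pair (x^nu, x^-nu) :: 'a \<times> 'b.
  The constraint function c^nu : R^n -> R^(r_nu) is given by its components
  c i, i < r.\<close>

definition X_nu :: "(nat \<Rightarrow> 'a \<times> 'b \<Rightarrow> real) \<Rightarrow> nat \<Rightarrow> 'b \<Rightarrow> 'a set" where
  "X_nu c r ym = {xn. \<forall>i<r. c i (xn, ym) \<le> 0}"

definition C1_constraints ::
  "(nat \<Rightarrow> ('a::real_normed_vector) \<times> ('b::real_normed_vector) \<Rightarrow> real) \<Rightarrow> (nat \<Rightarrow> 'a \<times> 'b \<Rightarrow> ('a \<times> 'b) \<Rightarrow>\<^sub>L real) \<Rightarrow> nat \<Rightarrow> bool"
  where
  "C1_constraints c c' r \<longleftrightarrow>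
     (\<forall>i<r. (\<forall>p. (c i has_derivative blinfun_apply (c' i p)) (at p)) \<and> continuous_on UNIV (c' i))"

text \<open>MFCQ_nu at x: there is d^nu with grad_{x^nu} c_i(x)^T d^nu < 0 for all active i.
  The partial gradient applied to d^nu is the full derivative applied to (d^nu, 0).\<close>
definition MFCQ_nu ::
  "(nat \<Rightarrow> ('a::real_normed_vector) \<times> ('b::real_normed_vector) \<Rightarrow> real) \<Rightarrow> (nat \<Rightarrow> 'a \<times> 'b \<Rightarrow> ('a \<times> 'b) \<Rightarrow>\<^sub>L real) \<Rightarrow> nat \<Rightarrow> 'a \<times> 'b \<Rightarrow> bool"
  where
  "MFCQ_nu c c' r x \<longleftrightarrow>
     (\<exists>d::'a. \<forall>i<r. c i x = 0 \<longrightarrow> blinfun_apply (c' i x) (d, 0) < 0)"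

end

theory Submission
  imports Defs
begin

lemma main_b:
  fixes c :: "nat \<Rightarrow> ('a::euclidean_space) \<times> ('b::euclidean_space) \<Rightarrow> real"
    and c' :: "nat \<Rightarrow> 'a \<times> 'b \<Rightarrow> ('a \<times> 'b) \<Rightarrow>\<^sub>L real"
    and r :: nat and x :: "'a \<times> 'b"
  assumes C1: "C1_constraints c c' r"
    and feas: "\<forall>i<r. c i x \<le> 0"
    and mfcq: "MFCQ_nu c c' r x"
    and ep: "\<epsilon> > 0"
  shows "\<exists>U. open U \<and> x \<in> U \<and>
          (\<forall>y\<in>U. \<exists>z\<in>X_nu c r (snd y). norm (z - fst y) \<le> \<epsilon>)"
proof -
  obtain d :: 'a where d: "\<forall>i<r. c i x = 0 \<longrightarrow> blinfun_apply (c' i x) (d, 0) < 0"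
    using mfcq unfolding MFCQ_nu_def by blast
  have der: "\<And>i p. i < r \<Longrightarrow> (c i has_derivative blinfun_apply (c' i p)) (at p)"
    using C1 unfolding C1_constraints_def by blast
  have cont: "\<And>i p. i < r \<Longrightarrow> isCont (c i) p"
    using der has_derivative_continuous by blast
  define g where "g i t = c i (x + t *\<^sub>R (d, 0))" for i t
  have ev: "\<forall>i\<in>{..<r}. eventually (\<lambda>t. g i t < 0) (at_right 0)"
  proof
    fix i assume "i \<in> {..<r}"
    hence ir: "i < r" by simp
    show "eventually (\<lambda>t. g i t < 0) (at_right 0)"
    proof (cases "c i x = 0")
      case True
      have lin: "((\<lambda>t::real. x + t *\<^sub>R (d, 0)) has_derivative (\<lambda>t. t *\<^sub>R (d, 0))) (at 0)"
        by (auto intro!: derivative_eq_intros)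
      have "((\<lambda>t. c i (x + t *\<^sub>R (d, 0))) has_derivative
              (\<lambda>t. blinfun_apply (c' i x) (t *\<^sub>R (d, 0)))) (at 0)"
        using has_derivative_compose[OF lin, of "c i" "blinfun_apply (c' i x)"] der[OF ir, of x] by (simp only: scale_zero_left add_0_right)
      hence "((\<lambda>t. c i (x + t *\<^sub>R (d, 0))) has_derivative
              (\<lambda>t. blinfun_apply (c' i x) (d, 0) * t)) (at 0)"
        by (simp only: blinfun.scaleR_right real_scaleR_def mult.commute)
      hence D: "(g i has_real_derivative blinfun_apply (c' i x) (d, 0)) (at 0)"
        unfolding g_def has_field_derivative_def by simp
      have neg: "blinfun_apply (c' i x) (d, 0) < 0" using d ir True by blast
      obtain e where e: "e > 0" "\<forall>h>0. h < e \<longrightarrow> g i (0 + h) < g i 0"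
        using has_real_derivative_neg_dec_right[OF D neg] by blast
      have g0: "g i 0 = 0" using True by (simp only: g_def scale_zero_left add_0_right)
      show ?thesis unfolding eventually_at_right_field
        using e g0 by (intro exI[of _ e]) auto
    next
      case False
      have "g i 0 = c i x" by (simp only: g_def scale_zero_left add_0_right)
      hence lt: "g i 0 < 0" using False feas ir by (simp add: less_le)
      have "isCont (g i) 0" unfolding g_def
        by (intro continuous_intros isCont_o2[OF _ cont[OF ir]])
      hence "((g i) \<longlongrightarrow> g i 0) (at_right 0)"
        by (simp add: isCont_def filterlim_at_split)
      thus ?thesis using lt by (rule order_tendstoD)
    qed
  qed
  have "eventually (\<lambda>t. \<forall>i\<in>{..<r}. g i t < 0) (at_right 0)"
    using ev by (simp add: eventually_ball_finite)
  moreover have "eventually (\<lambda>t::real. t > 0 \<and> t < \<epsilon> / (norm d + 1)) (at_right 0)"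
  proof -
    have k: "\<epsilon> / (norm d + 1) > 0" using ep
      by (intro divide_pos_pos) (auto intro: add_nonneg_pos)
    show ?thesis unfolding eventually_at_right_field
      using k by (intro exI[of _ "\<epsilon> / (norm d + 1)"]) auto
  qed
  ultimately have "eventually (\<lambda>t. (\<forall>i\<in>{..<r}. g i t < 0) \<and> t > 0 \<and> t < \<epsilon> / (norm d + 1)) (at_right 0)"
    by (rule eventually_conj)
  then obtain t where t: "\<forall>i\<in>{..<r}. g i t < 0" "t > 0" "t < \<epsilon> / (norm d + 1)"
    using eventually_happens'[OF trivial_limit_at_right_real] by blast
  define U where "U = (\<Inter>i\<in>{..<r}. (\<lambda>y. c i (fst y + t *\<^sub>R d, snd y)) -` {..<0})"
  have "open U" unfolding U_def
  proof (intro open_INT ballI)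
    fix i assume "i \<in> {..<r}"
    hence ir: "i < r" by simp
    have "continuous_on UNIV (\<lambda>y. c i (fst y + t *\<^sub>R d, snd y))"
      by (intro continuous_at_imp_continuous_on ballI isCont_o2[OF _ cont[OF ir]])
        (auto intro!: continuous_intros)
    thus "open ((\<lambda>y. c i (fst y + t *\<^sub>R d, snd y)) -` {..<0})"
      by (intro open_vimage) auto
  qed simp
  moreover have "x \<in> U" using t(1) unfolding U_def g_def
    by (cases x) auto
  moreover have "\<forall>y\<in>U. \<exists>z\<in>X_nu c r (snd y). norm (z - fst y) \<le> \<epsilon>"
  proof
    fix y assume "y \<in> U"
    hence "fst y + t *\<^sub>R d \<in> X_nu c r (snd y)" unfolding U_def X_nu_def by (auto intro: less_imp_le)
    moreover have "norm (t *\<^sub>R d) \<le> \<epsilon>"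
    proof -
      have "norm (t *\<^sub>R d) = t * norm d" using t(2) by simp
      also have "\<dots> \<le> t * (norm d + 1)" using t(2) by simp
      also have "\<dots> \<le> \<epsilon>" using t(3)
        by (metis less_imp_le pos_less_divide_eq add_nonneg_pos norm_ge_zero zero_less_one)
      finally show ?thesis .
    qed
    ultimately show "\<exists>z\<in>X_nu c r (snd y). norm (z - fst y) \<le> \<epsilon>"
      by (intro bexI[of _ "fst y + t *\<^sub>R d"]) auto
  qed
  ultimately show ?thesis by blast
qed

theorem lemma2p9:
  fixes c :: "nat \<Rightarrow> ('a::euclidean_space) \<times> ('b::euclidean_space) \<Rightarrow> real"
    and c' :: "nat \<Rightarrow> 'a \<times> 'b \<Rightarrow> ('a \<times> 'b) \<Rightarrow>\<^sub>L real"
    and r :: nat and x :: "'a \<times> 'b"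
  assumes C1: "C1_constraints c c' r"
    and feas: "\<forall>i<r. c i x \<le> 0"
    and mfcq: "MFCQ_nu c c' r x"
  shows "(\<exists>U. open U \<and> x \<in> U \<and> (\<forall>y\<in>U. X_nu c r (snd y) \<noteq> {}))
    \<and> (\<forall>\<epsilon>>0. \<exists>U. open U \<and> x \<in> U \<and>
          (\<forall>y\<in>U. \<exists>z\<in>X_nu c r (snd y). norm (z - fst y) \<le> \<epsilon>))"
proof
  show "\<forall>\<epsilon>>0. \<exists>U. open U \<and> x \<in> U \<and>
          (\<forall>y\<in>U. \<exists>z\<in>X_nu c r (snd y). norm (z - fst y) \<le> \<epsilon>)"
    using main_b[OF C1 feas mfcq] by blast
  then obtain U where "open U" "x \<in> U" "\<forall>y\<in>U. \<exists>z\<in>X_nu c r (snd y). norm (z - fst y) \<le> 1"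
    by (meson zero_less_one)
  thus "\<exists>U. open U \<and> x \<in> U \<and> (\<forall>y\<in>U. X_nu c r (snd y) \<noteq> {})" by blast
qed

end
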